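(* Fix $0<\epsilon<1$ and $k<m$. Suppose $A\in\mathbb{R}^{m\times n}$ has i.i.d. $\mathcal{N}(0,1/m)$ entries with rows $a_\ell$. Let $T\subset\mathbb{R}^n$ be a $k$-dimensional subspace and $W_0,Z_0$ subsets of $\mathbb{R}^n$. Let $E$ be the event that for all $\Omega\subset[m]$ with $|\Omega|\leqslant2k$, $|\langle\tilde A_{z_0}^\top\tilde A_{w_0}x,y\rangle|\leqslant\epsilon\|x\|\|y\|$ for all $x,y\in T$, $w_0\in W_0$, $z_0\in Z_0$, where $\tilde A_{z_0}^\top\tilde A_{w_0}:=\sum_{\ell\in\Omega}\mathrm{sgn}(\langle a_\ell,z_0\rangle\langle a_\ell,w_0\rangle)a_\ell a_\ell^\top$. Then there exists $\delta_\epsilon>0$ such that if $m\geqslant9\epsilon^{-1}k$ and $2k\leqslant\delta_\epsilon m$, then $\mathbb{P}(E)\geqslant1-2m\exp(-\epsilon m/36)$.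
   Context: $\mathrm{sgn}(0)=0$. *)

theory Defs
  imports "HOL-Probability.Probability"
begin

text \<open>Vectors of R^n are represented as functions nat => real vanishing outside {..<n};
  n is an explicit natural number so that constants may be chosen uniformly in n.\<close>

definition Rn :: "nat \<Rightarrow> (nat \<Rightarrow> real) set" where
  "Rn n = {x. \<forall>j\<ge>n. x j = 0}"

definition ip :: "nat \<Rightarrow> (nat \<Rightarrow> real) \<Rightarrow> (nat \<Rightarrow> real) \<Rightarrow> real" where
  "ip n x y = (\<Sum>j<n. x j * y j)"

definition vnorm :: "nat \<Rightarrow> (nat \<Rightarrow> real) \<Rightarrow> real" where
  "vnorm n x = sqrt (ip n x x)"

definition subspace_of_dim :: "nat \<Rightarrow> nat \<Rightarrow> (nat \<Rightarrow> real) set \<Rightarrow> bool" where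
  "subspace_of_dim n k T \<longleftrightarrow>
     (\<exists>v :: nat \<Rightarrow> nat \<Rightarrow> real.
        (\<forall>i<k. v i \<in> Rn n) \<and>
        (\<forall>c :: nat \<Rightarrow> real. (\<forall>j. (\<Sum>i<k. c i * v i j) = 0) \<longrightarrow> (\<forall>i<k. c i = 0)) \<and>
        T = {x. \<exists>c :: nat \<Rightarrow> real. x = (\<lambda>j. \<Sum>i<k. c i * v i j)})"

text \<open>Probability space of m x n matrices with i.i.d. N(0,1/m) entries
  (normal_density takes the standard deviation).\<close>
definition gauss_mat :: "nat \<Rightarrow> nat \<Rightarrow> (nat \<times> nat \<Rightarrow> real) measure" where
  "gauss_mat m n = PiM ({..<m} \<times> {..<n})
      (\<lambda>_. density lborel (normal_density 0 (1 / sqrt (real m))))"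

definition row :: "nat \<Rightarrow> (nat \<times> nat \<Rightarrow> real) \<Rightarrow> nat \<Rightarrow> nat \<Rightarrow> real" where
  "row n A l = (\<lambda>j. if j < n then A (l, j) else 0)"

definition tAA :: "nat \<Rightarrow> (nat \<times> nat \<Rightarrow> real) \<Rightarrow> nat set \<Rightarrow> (nat \<Rightarrow> real) \<Rightarrow> (nat \<Rightarrow> real)
                   \<Rightarrow> nat \<Rightarrow> nat \<Rightarrow> real" where
  "tAA n A \<Omega> z0 w0 = (\<lambda>i j. \<Sum>l\<in>\<Omega>.
      sgn (ip n (row n A l) z0 * ip n (row n A l) w0) * row n A l i * row n A l j)"

definition mat_vec :: "nat \<Rightarrow> (nat \<Rightarrow> nat \<Rightarrow> real) \<Rightarrow> (nat \<Rightarrow> real) \<Rightarrow> nat \<Rightarrow> real" where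
  "mat_vec n M x = (\<lambda>i. if i < n then (\<Sum>j<n. M i j * x j) else 0)"

definition event_E :: "nat \<Rightarrow> nat \<Rightarrow> nat \<Rightarrow> real \<Rightarrow> (nat \<Rightarrow> real) set \<Rightarrow> (nat \<Rightarrow> real) set
                       \<Rightarrow> (nat \<Rightarrow> real) set \<Rightarrow> (nat \<times> nat \<Rightarrow> real) set" where
  "event_E m n k \<epsilon> T W0 Z0 = {A \<in> space (gauss_mat m n).
      \<forall>\<Omega>. \<Omega> \<subseteq> {..<m} \<and> card \<Omega> \<le> 2 * k \<longrightarrow>
        (\<forall>x\<in>T. \<forall>y\<in>T. \<forall>w0\<in>W0. \<forall>z0\<in>Z0.
           \<bar>ip n (mat_vec n (tAA n A \<Omega> z0 w0) x) y\<bar> \<le> \<epsilon> * vnorm n x * vnorm n y)}"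

end

theory Submission
  imports Defs
begin


lemma normal_shift:
  assumes "\<sigma> > 0"
  shows "normal_density 0 \<sigma> x * exp (a * x) = exp (a\<^sup>2 * \<sigma>\<^sup>2 / 2) * normal_density (a * \<sigma>\<^sup>2) \<sigma> x"
proof -
  have "-(x - 0)\<^sup>2 / (2 * \<sigma>\<^sup>2) + a * x = a\<^sup>2 * \<sigma>\<^sup>2 / 2 + (-(x - a * \<sigma>\<^sup>2)\<^sup>2 / (2 * \<sigma>\<^sup>2))"
    using assms by (simp add: field_simps power2_eq_square)
  then show ?thesis unfolding normal_density_def
    by (simp add: exp_add[symmetric] mult.commute mult.left_commute)
qed

lemma normal_mgf:
  assumes "\<sigma> > 0"
  shows "(\<integral>\<^sup>+x. ennreal (exp (a * x)) \<partial>density lborel (normal_density 0 \<sigma>))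
       = ennreal (exp (a\<^sup>2 * \<sigma>\<^sup>2 / 2))"
proof -
  have "(\<integral>\<^sup>+x. ennreal (exp (a * x)) \<partial>density lborel (normal_density 0 \<sigma>))
      = (\<integral>\<^sup>+x. ennreal (normal_density 0 \<sigma> x) * ennreal (exp (a * x)) \<partial>lborel)"
    by (subst nn_integral_density) auto
  also have "\<dots> = (\<integral>\<^sup>+x. ennreal (exp (a\<^sup>2 * \<sigma>\<^sup>2 / 2)) * ennreal (normal_density (a * \<sigma>\<^sup>2) \<sigma> x) \<partial>lborel)"
    using normal_shift[OF assms] by (simp add: ennreal_mult[symmetric])
  also have "\<dots> = ennreal (exp (a\<^sup>2 * \<sigma>\<^sup>2 / 2)) * (\<integral>\<^sup>+x. ennreal (normal_density (a * \<sigma>\<^sup>2) \<sigma> x) \<partial>lborel)"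
    by (subst nn_integral_cmult) auto
  also have "(\<integral>\<^sup>+x. ennreal (normal_density (a * \<sigma>\<^sup>2) \<sigma> x) \<partial>lborel) = 1"
    by (subst nn_integral_eq_integral) (auto intro: integrable_normal_density simp: integral_normal_density assms)
  finally show ?thesis by simp
qed

lemma prob_space_gauss_mat: "prob_space (gauss_mat m n)"
  unfolding gauss_mat_def by (intro prob_space_PiM prob_space_normal_density) auto

lemma gauss_tail:
  fixes C :: "nat \<times> nat \<Rightarrow> real"
  assumes m: "m > 0" and C: "(\<Sum>p\<in>{..<m}\<times>{..<n}. (C p)\<^sup>2) \<le> 1" and t: "t \<ge> 0"
  shows "measure (gauss_mat m n) {A \<in> space (gauss_mat m n). t < (\<Sum>p\<in>{..<m}\<times>{..<n}. C p * A p)}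
          \<le> exp (- real m * t\<^sup>2 / 2)"
proof -
  define I where "I = {..<m}\<times>{..<n}"
  define \<sigma> where "\<sigma> = 1 / sqrt (real m)"
  define N where "N = density lborel (normal_density 0 \<sigma>)"
  define M where "M = gauss_mat m n"
  define l where "l = real m * t"
  have M_def': "M = PiM I (\<lambda>_. N)" unfolding M_def gauss_mat_def I_def N_def \<sigma>_def ..
  have \<sigma>: "\<sigma> > 0" "\<sigma>\<^sup>2 = 1 / real m" using m by (auto simp: \<sigma>_def power_divide)
  have fin: "finite I" unfolding I_def by auto
  interpret N: prob_space N unfolding N_def by (rule prob_space_normal_density[OF \<sigma>(1)])
  interpret P: product_sigma_finite "\<lambda>_. N" by standard
  interpret M: prob_space M unfolding M_def by (rule prob_space_gauss_mat)
  define S where "S = (\<lambda>A. \<Sum>p\<in>I. C p * A p)"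
  have proj: "(\<lambda>A. A p) \<in> borel_measurable M" if "p \<in> I" for p
  proof -
    have "(\<lambda>A. A p) \<in> measurable M N" unfolding M_def' using that by (rule measurable_component_singleton)
    moreover have "sets N = sets borel" unfolding N_def by simp
    ultimately show ?thesis using measurable_cong_sets[of M M N borel] by blast
  qed
  have Smeas: "S \<in> borel_measurable M" unfolding S_def using proj by (intro borel_measurable_sum borel_measurable_times) auto
  have fm: "(\<lambda>x. ennreal (exp (l * C p * x))) \<in> borel_measurable borel" for p by measurable
  have pm: "(\<lambda>A. \<Prod>p\<in>I. ennreal (exp (l * C p * A p))) \<in> borel_measurable M"
    by (intro borel_measurable_prod_ennreal measurable_compose[OF proj fm])
  have set: "{A \<in> space M. t < S A} \<in> sets M" using Smeas by measurable
  have "emeasure M {A \<in> space M. t < S A} = (\<integral>\<^sup>+A. indicator {A \<in> space M. t < S A} A \<partial>M)"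
    using set by simp
  also have "\<dots> \<le> (\<integral>\<^sup>+A. ennreal (exp (- l * t)) * (\<Prod>p\<in>I. ennreal (exp (l * C p * A p))) \<partial>M)"
  proof (rule nn_integral_mono)
    fix A assume "A \<in> space M"
    have "(\<Prod>p\<in>I. ennreal (exp (l * C p * A p))) = ennreal (\<Prod>p\<in>I. exp (l * C p * A p))"
      by (rule prod_ennreal) auto
    also have "(\<Prod>p\<in>I. exp (l * C p * A p)) = exp (l * S A)"
      unfolding S_def by (simp add: exp_sum[OF fin, symmetric] sum_distrib_left mult.assoc)
    finally have eq: "(\<Prod>p\<in>I. ennreal (exp (l * C p * A p))) = ennreal (exp (l * S A))" .
    show "indicator {A \<in> space M. t < S A} A \<le> ennreal (exp (- l * t)) * (\<Prod>p\<in>I. ennreal (exp (l * C p * A p)))"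
    proof (cases "t < S A")
      case True
      have "l * t \<le> l * S A" using True t m unfolding l_def by (intro mult_left_mono) auto
      then have "1 \<le> exp (- l * t) * exp (l * S A)" by (simp add: exp_add[symmetric])
      then show ?thesis using True \<open>A \<in> space M\<close> eq by (simp add: ennreal_mult[symmetric])
    qed simp
  qed
  also have "\<dots> = ennreal (exp (- l * t)) * (\<integral>\<^sup>+A. (\<Prod>p\<in>I. ennreal (exp (l * C p * A p))) \<partial>M)"
    by (subst nn_integral_cmult) (auto simp: pm)
  also have "(\<integral>\<^sup>+A. (\<Prod>p\<in>I. ennreal (exp (l * C p * A p))) \<partial>M) = (\<Prod>p\<in>I. \<integral>\<^sup>+x. ennreal (exp (l * C p * x)) \<partial>N)"
    unfolding M_def' by (rule P.product_nn_integral_prod[OF fin]) (simp add: N_def)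
  also have "\<dots> = (\<Prod>p\<in>I. ennreal (exp ((l * C p)\<^sup>2 * \<sigma>\<^sup>2 / 2)))"
    unfolding N_def using normal_mgf[OF \<sigma>(1)] by (intro prod.cong) auto
  also have "\<dots> = ennreal (\<Prod>p\<in>I. exp ((l * C p)\<^sup>2 * \<sigma>\<^sup>2 / 2))"
    by (rule prod_ennreal) auto
  also have "(\<Prod>p\<in>I. exp ((l * C p)\<^sup>2 * \<sigma>\<^sup>2 / 2)) = exp (l\<^sup>2 * \<sigma>\<^sup>2 / 2 * (\<Sum>p\<in>I. (C p)\<^sup>2))"
    by (simp add: exp_sum[OF fin, symmetric] sum_distrib_left power_mult_distrib mult_ac)
  also have "ennreal (exp (- l * t)) * ennreal \<dots> = ennreal (exp (- l * t + l\<^sup>2 * \<sigma>\<^sup>2 / 2 * (\<Sum>p\<in>I. (C p)\<^sup>2)))"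
    by (simp add: ennreal_mult[symmetric] exp_add[symmetric])
  finally have em: "emeasure M {A \<in> space M. t < S A} \<le> ennreal (exp (- l * t + l\<^sup>2 * \<sigma>\<^sup>2 / 2 * (\<Sum>p\<in>I. (C p)\<^sup>2)))" .
  have "l\<^sup>2 * \<sigma>\<^sup>2 / 2 * (\<Sum>p\<in>I. (C p)\<^sup>2) \<le> l\<^sup>2 * \<sigma>\<^sup>2 / 2"
    using C unfolding I_def by (intro mult_left_le) auto
  moreover have "- l * t + l\<^sup>2 * \<sigma>\<^sup>2 / 2 = - real m * t\<^sup>2 / 2"
    unfolding l_def \<sigma>(2) using m by (simp add: field_simps power2_eq_square)
  ultimately have "exp (- l * t + l\<^sup>2 * \<sigma>\<^sup>2 / 2 * (\<Sum>p\<in>I. (C p)\<^sup>2)) \<le> exp (- real m * t\<^sup>2 / 2)"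
    by simp
  then have "emeasure M {A \<in> space M. t < S A} \<le> ennreal (exp (- real m * t\<^sup>2 / 2))"
    by (rule order_trans[OF em ennreal_leI])
  then have "ennreal (measure M {A \<in> space M. t < S A}) \<le> ennreal (exp (- real m * t\<^sup>2 / 2))"
    by (simp only: M.emeasure_eq_measure)
  then have "measure M {A \<in> space M. t < S A} \<le> exp (- real m * t\<^sup>2 / 2)"
    by (subst (asm) ennreal_le_iff) auto
  then show ?thesis unfolding M_def S_def I_def .
qed



lemma CS: "(\<Sum>i\<in>A. f i * g i :: real)\<^sup>2 \<le> (\<Sum>i\<in>A. (f i)\<^sup>2) * (\<Sum>i\<in>A. (g i)\<^sup>2)"
proof -
  have "\<bar>\<Sum>i\<in>A. f i * g i\<bar> \<le> (\<Sum>i\<in>A. \<bar>f i\<bar> * \<bar>g i\<bar>)"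
    by (rule order_trans[OF sum_abs]) (simp add: abs_mult)
  also have "\<dots> \<le> L2_set f A * L2_set g A" by (rule L2_set_mult_ineq)
  finally have "(\<Sum>i\<in>A. f i * g i)\<^sup>2 \<le> (L2_set f A * L2_set g A)\<^sup>2"
    by (metis abs_ge_zero power2_abs power_mono)
  also have "\<dots> = (\<Sum>i\<in>A. (f i)\<^sup>2) * (\<Sum>i\<in>A. (g i)\<^sup>2)"
    unfolding L2_set_def power_mult_distrib by (simp add: sum_nonneg)
  finally show ?thesis .
qed

lemma geo_half: "(\<Sum>j\<in>{-int N..int N}. (1/2::real) ^ nat \<bar>j\<bar>) = 3 - 2 * (1/2) ^ N"
proof (induction N)
  case 0 then show ?case by simp
next
  case (Suc N)
  have "{-int (Suc N)..int (Suc N)} = insert (int (Suc N)) (insert (- int (Suc N)) {-int N..int N})"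
    by auto
  then have "(\<Sum>j\<in>{-int (Suc N)..int (Suc N)}. (1/2::real) ^ nat \<bar>j\<bar>)
     = (1/2)^(Suc N) + (1/2)^(Suc N) + (\<Sum>j\<in>{-int N..int N}. (1/2::real) ^ nat \<bar>j\<bar>)"
    by (simp add: nat_add_distrib)
  then show ?case using Suc by simp
qed

definition Zs :: "nat set \<Rightarrow> nat \<Rightarrow> (nat \<Rightarrow> int) set" where
  "Zs I N = {z \<in> PiE I (\<lambda>_. {-int N..int N}). (\<Sum>i\<in>I. nat \<bar>z i\<bar>) \<le> N}"

lemma Zs_finite: "finite I \<Longrightarrow> finite (Zs I N)"
  unfolding Zs_def by (rule finite_subset[of _ "PiE I (\<lambda>_. {-int N..int N})"]) (auto intro: finite_PiE)

lemma card_Zs: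
  assumes "finite I"
  shows "real (card (Zs I N)) \<le> 2 ^ N * 3 ^ card I"
proof -
  let ?P = "PiE I (\<lambda>_. {-int N..int N})"
  have finP: "finite ?P" using assms by (auto intro: finite_PiE)
  have eqP: "(\<Sum>z\<in>?P. (\<Prod>i\<in>I. (1/2::real) ^ nat \<bar>z i\<bar>)) = (\<Prod>i\<in>I. \<Sum>j\<in>{-int N..int N}. (1/2::real) ^ nat \<bar>j\<bar>)"
    by (rule prod_sum_PiE[OF assms, symmetric]) auto
  have "real (card (Zs I N)) = (\<Sum>z\<in>Zs I N. 1)" by simp
  also have "\<dots> \<le> (\<Sum>z\<in>Zs I N. 2 ^ N * (\<Prod>i\<in>I. (1/2::real) ^ nat \<bar>z i\<bar>))"
  proof (rule sum_mono)
    fix z assume z: "z \<in> Zs I N"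
    have "(\<Prod>i\<in>I. (1/2::real) ^ nat \<bar>z i\<bar>) = (1/2) ^ (\<Sum>i\<in>I. nat \<bar>z i\<bar>)"
      by (simp add: power_sum)
    also have "\<dots> \<ge> (1/2) ^ N" using z unfolding Zs_def by (intro power_decreasing) auto
    finally have "(1/2::real) ^ N \<le> (\<Prod>i\<in>I. (1/2::real) ^ nat \<bar>z i\<bar>)" .
    then have "2 ^ N * (1/2::real) ^ N \<le> 2 ^ N * (\<Prod>i\<in>I. (1/2::real) ^ nat \<bar>z i\<bar>)"
      by (intro mult_left_mono) auto
    then show "1 \<le> 2 ^ N * (\<Prod>i\<in>I. (1/2::real) ^ nat \<bar>z i\<bar>)"
      by (simp add: power_mult_distrib[symmetric])
  qed
  also have "\<dots> \<le> (\<Sum>z\<in>?P. 2 ^ N * (\<Prod>i\<in>I. (1/2::real) ^ nat \<bar>z i\<bar>))"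
    by (rule sum_mono2[OF finP]) (auto simp: Zs_def intro!: mult_nonneg_nonneg prod_nonneg)
  also have "\<dots> = 2 ^ N * (\<Prod>i\<in>I. \<Sum>j\<in>{-int N..int N}. (1/2::real) ^ nat \<bar>j\<bar>)"
    using eqP by (simp only: sum_distrib_left[symmetric])
  also have "\<dots> \<le> 2 ^ N * (\<Prod>i\<in>I. 3)"
    unfolding geo_half using power_le_one[of "1/2::real" N] by (intro mult_left_mono prod_mono) auto
  finally show ?thesis by simp
qed



definition netI :: "nat set \<Rightarrow> (nat \<Rightarrow> real) set" where
  "netI I = {w \<in> (\<lambda>z i. if i \<in> I then real_of_int (z i) / (4 * sqrt (card I)) else 0) ` Zs I (4 * card I).
              (\<Sum>i\<in>I. (w i)\<^sup>2) \<le> 1}"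

lemma netI_finite: "finite I \<Longrightarrow> finite (netI I)"
  unfolding netI_def using Zs_finite by auto

lemma netI_card: assumes "finite I" shows "real (card (netI I)) \<le> 48 ^ card I"
proof -
  have "card (netI I) \<le> card ((\<lambda>z i. if i \<in> I then real_of_int (z i) / (4 * sqrt (card I)) else 0) ` Zs I (4 * card I))"
    unfolding netI_def using Zs_finite[OF assms] by (intro card_mono) auto
  also have "\<dots> \<le> card (Zs I (4 * card I))" by (rule card_image_le[OF Zs_finite[OF assms]])
  finally have "real (card (netI I)) \<le> real (card (Zs I (4 * card I)))" by simp
  also have "\<dots> \<le> 2 ^ (4 * card I) * 3 ^ card I" by (rule card_Zs[OF assms])
  also have "\<dots> = 48 ^ card I" by (simp add: power_mult power_mult_distrib[symmetric])
  finally show ?thesis .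
qed

lemma netI_ball: "w \<in> netI I \<Longrightarrow> (\<Sum>i\<in>I. (w i)\<^sup>2) \<le> 1"
  unfolding netI_def by auto

lemma netI_approx:
  assumes fin: "finite I" and c: "(\<Sum>i\<in>I. (c i)\<^sup>2) \<le> 1"
  shows "\<exists>w\<in>netI I. (\<Sum>i\<in>I. (c i - w i)\<^sup>2) \<le> 1/16"
proof (cases "I = {}")
  case True
  have "(\<lambda>i. 0) \<in> netI I"
    unfolding netI_def Zs_def True by (auto intro!: image_eqI[where x="\<lambda>_. undefined"])
  then show ?thesis using True by auto
next
  case False
  define d where "d = card I"
  have d: "d \<ge> 1" using False fin unfolding d_def by (simp add: Suc_leI card_gt_0_iff)
  define q where "q = 4 * sqrt (real d)"
  have q: "q > 0" using d unfolding q_def by auto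
  have q2: "q\<^sup>2 = 16 * real d" unfolding q_def by (simp add: power_mult_distrib)
  define r where "r = (\<lambda>x::real. if x \<ge> 0 then \<lfloor>x\<rfloor> else - \<lfloor>- x\<rfloor>)"
  have r1: "\<bar>real_of_int (r x)\<bar> \<le> \<bar>x\<bar>" for x unfolding r_def by auto
  have r2: "\<bar>x - real_of_int (r x)\<bar> \<le> 1" for x unfolding r_def by auto linarith+
  define z where "z = (\<lambda>i. if i \<in> I then r (c i * q) else undefined)"
  define w where "w = (\<lambda>i. if i \<in> I then real_of_int (z i) / (4 * sqrt (card I)) else 0)"
  have wq: "w i = real_of_int (r (c i * q)) / q" if "i \<in> I" for i
    using that unfolding w_def z_def q_def d_def by simp
  have zb: "\<bar>real_of_int (z i)\<bar> \<le> \<bar>c i\<bar> * q" if "i \<in> I" for i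
    using that r1[of "c i * q"] q unfolding z_def by (simp add: abs_mult)
  have "(\<Sum>i\<in>I. \<bar>c i\<bar> * 1)\<^sup>2 \<le> (\<Sum>i\<in>I. (\<bar>c i\<bar>)\<^sup>2) * (\<Sum>i\<in>I. 1\<^sup>2)" by (rule CS)
  also have "\<dots> \<le> 1 * real d" using c mult_right_mono[OF c, of "real (card I)"] unfolding d_def by simp
  finally have "(\<Sum>i\<in>I. \<bar>c i\<bar>)\<^sup>2 \<le> (sqrt (real d))\<^sup>2" by simp
  then have sc: "(\<Sum>i\<in>I. \<bar>c i\<bar>) \<le> sqrt (real d)"
    by (rule power2_le_imp_le) auto
  have "(\<Sum>i\<in>I. \<bar>real_of_int (z i)\<bar>) \<le> (\<Sum>i\<in>I. \<bar>c i\<bar> * q)" by (rule sum_mono) (rule zb)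
  also have "\<dots> = q * (\<Sum>i\<in>I. \<bar>c i\<bar>)" by (simp add: sum_distrib_left mult.commute)
  also have "\<dots> \<le> q * sqrt (real d)" using sc q by (intro mult_left_mono) auto
  also have "\<dots> = 4 * real d" unfolding q_def by simp
  finally have zsum: "(\<Sum>i\<in>I. \<bar>real_of_int (z i)\<bar>) \<le> 4 * real d" .
  have zi: "\<bar>z i\<bar> \<le> int (4 * d)" if "i \<in> I" for i
  proof -
    have "\<bar>real_of_int (z i)\<bar> \<le> (\<Sum>i\<in>I. \<bar>real_of_int (z i)\<bar>)"
      using that fin by (intro member_le_sum) auto
    then show ?thesis using zsum by linarith
  qed
  have "real (\<Sum>i\<in>I. nat \<bar>z i\<bar>) = (\<Sum>i\<in>I. \<bar>real_of_int (z i)\<bar>)"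
    by (simp add: of_nat_sum)
  then have "(\<Sum>i\<in>I. nat \<bar>z i\<bar>) \<le> 4 * card I" using zsum unfolding d_def
    by linarith
  moreover have "z \<in> PiE I (\<lambda>_. {-int (4 * card I)..int (4 * card I)})"
    using zi unfolding d_def by (auto simp: z_def PiE_def extensional_def abs_le_iff) (smt (verit))
  ultimately have zZ: "z \<in> Zs I (4 * card I)" unfolding Zs_def by auto
  have wb: "\<bar>w i\<bar> \<le> \<bar>c i\<bar>" if "i \<in> I" for i
  proof -
    have "\<bar>w i\<bar> = \<bar>real_of_int (z i)\<bar> / q" using that q unfolding w_def q_def d_def by (simp add: abs_divide)
    also have "\<dots> \<le> \<bar>c i\<bar> * q / q" using zb[OF that] q by (intro divide_right_mono) auto
    finally show ?thesis using q by simp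
  qed
  have "(\<Sum>i\<in>I. (w i)\<^sup>2) \<le> (\<Sum>i\<in>I. (c i)\<^sup>2)"
    using wb by (intro sum_mono) (metis abs_le_square_iff)
  then have "w \<in> netI I" using c zZ unfolding netI_def w_def by auto
  moreover have "(\<Sum>i\<in>I. (c i - w i)\<^sup>2) \<le> 1/16"
  proof -
    have "(c i - w i)\<^sup>2 \<le> 1 / (16 * real d)" if "i \<in> I" for i
    proof -
      have "c i - w i = (c i * q - real_of_int (r (c i * q))) / q" using wq[OF that] q
        by (simp add: field_simps)
      then have "(c i - w i)\<^sup>2 = (c i * q - real_of_int (r (c i * q)))\<^sup>2 / q\<^sup>2"
        by (simp add: power_divide)
      also have "\<dots> \<le> 1 / q\<^sup>2"
        using r2[of "c i * q"] q by (intro divide_right_mono) (auto simp: abs_square_le_1)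
      finally show ?thesis using q2 by simp
    qed
    then have "(\<Sum>i\<in>I. (c i - w i)\<^sup>2) \<le> (\<Sum>i\<in>I. 1 / (16 * real d))" by (rule sum_mono)
    also have "\<dots> = 1/16" using d unfolding d_def by simp
    finally show ?thesis .
  qed
  ultimately show ?thesis by blast
qed



lemma sq_le_sum:
  assumes "finite I" "i \<in> I" "(\<Sum>i\<in>I. (c i)\<^sup>2) \<le> (1::real)"
  shows "\<bar>c i\<bar> \<le> 1"
proof -
  have "(c i)\<^sup>2 \<le> (\<Sum>i\<in>I. (c i)\<^sup>2)" using assms by (intro member_le_sum) auto
  then have "(c i)\<^sup>2 \<le> 1" using assms by simp
  then show ?thesis by (simp add: abs_square_le_1)
qed

lemma bilinear_bound:
  fixes K :: "nat \<Rightarrow> nat \<Rightarrow> real"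
  assumes finI: "finite I" and finJ: "finite J" and t: "t \<ge> 0"
    and H: "\<And>c v. c \<in> netI I \<Longrightarrow> v \<in> netI J \<Longrightarrow> (\<Sum>i\<in>I. \<Sum>l\<in>J. c i * v l * K i l) \<le> t"
  shows "(\<Sum>l\<in>J. (\<Sum>i\<in>I. c i * K i l)\<^sup>2) \<le> 4 * t\<^sup>2 * (\<Sum>i\<in>I. (c i)\<^sup>2)"
proof -
  define F where "F = (\<lambda>c v. (\<Sum>i\<in>I. \<Sum>l\<in>J. c i * v l * K i l))"
  define B where "B = (\<lambda>X. {c::nat\<Rightarrow>real. (\<Sum>i\<in>X. (c i)\<^sup>2) \<le> 1})"
  define S where "S = (\<lambda>(c,v). F c v) ` (B I \<times> B J)"
  have "(\<lambda>_. 0) \<in> B I" "(\<lambda>_. 0) \<in> B J" unfolding B_def by auto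
  then have ne: "S \<noteq> {}" unfolding S_def by auto
  have bdd: "bdd_above S"
  proof (rule bdd_aboveI)
    fix x assume "x \<in> S"
    then obtain c v where cv: "c \<in> B I" "v \<in> B J" "x = F c v" unfolding S_def by auto
    have "x \<le> \<bar>F c v\<bar>" using cv by simp
    also have "\<dots> \<le> (\<Sum>i\<in>I. \<Sum>l\<in>J. \<bar>c i * v l * K i l\<bar>)"
      unfolding F_def by (rule order_trans[OF sum_abs]) (intro sum_mono sum_abs)
    also have "\<dots> \<le> (\<Sum>i\<in>I. \<Sum>l\<in>J. \<bar>K i l\<bar>)"
    proof (intro sum_mono)
      fix i l assume "i \<in> I" "l \<in> J"
      then have "\<bar>c i\<bar> \<le> 1" "\<bar>v l\<bar> \<le> 1" using cv sq_le_sum finI finJ unfolding B_def by auto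
      then have "\<bar>c i\<bar> * \<bar>v l\<bar> \<le> 1" by (simp add: mult_le_one)
      then have "\<bar>c i\<bar> * \<bar>v l\<bar> * \<bar>K i l\<bar> \<le> 1 * \<bar>K i l\<bar>" by (intro mult_right_mono) auto
      then show "\<bar>c i * v l * K i l\<bar> \<le> \<bar>K i l\<bar>" by (simp add: abs_mult)
    qed
    finally show "x \<le> (\<Sum>i\<in>I. \<Sum>l\<in>J. \<bar>K i l\<bar>)" .
  qed
  define M where "M = Sup S"
  have up: "F c v \<le> M" if "c \<in> B I" "v \<in> B J" for c v
    unfolding M_def using that bdd by (intro cSup_upper) (auto simp: S_def)
  have split: "F c v = F c' v' + F (\<lambda>i. c i - c' i) v + F c' (\<lambda>l. v l - v' l)" for c c' v v'
    unfolding F_def by (simp add: sum.distrib[symmetric] algebra_simps)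
  have scale: "F (\<lambda>i. a * c i) v = a * F c v" "F c (\<lambda>l. a * v l) = a * F c v" for a c v
    unfolding F_def by (simp_all add: sum_distrib_left mult_ac)
  have small: "F (\<lambda>i. c i - c' i) v \<le> M / 4"
    if "v \<in> B J" "(\<Sum>i\<in>I. (c i - c' i)\<^sup>2) \<le> 1/16" for c c' v
  proof -
    have e: "(\<Sum>i\<in>I. (4 * (c i - c' i))\<^sup>2) = 16 * (\<Sum>i\<in>I. (c i - c' i)\<^sup>2)"
      by (simp only: power_mult_distrib sum_distrib_left[symmetric]) simp
    have "(\<lambda>i. 4 * (c i - c' i)) \<in> B I" unfolding B_def mem_Collect_eq e using that by simp
    then have "F (\<lambda>i. 4 * (c i - c' i)) v \<le> M" using that up by auto
    then show ?thesis using scale(1)[of 4 "\<lambda>i. c i - c' i" v] by simp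
  qed
  have small2: "F c (\<lambda>l. v l - v' l) \<le> M / 4"
    if "c \<in> B I" "(\<Sum>l\<in>J. (v l - v' l)\<^sup>2) \<le> 1/16" for c v v'
  proof -
    have e: "(\<Sum>l\<in>J. (4 * (v l - v' l))\<^sup>2) = 16 * (\<Sum>l\<in>J. (v l - v' l)\<^sup>2)"
      by (simp only: power_mult_distrib sum_distrib_left[symmetric]) simp
    have "(\<lambda>l. 4 * (v l - v' l)) \<in> B J" unfolding B_def mem_Collect_eq e using that by simp
    then have "F c (\<lambda>l. 4 * (v l - v' l)) \<le> M" using that up by auto
    then show ?thesis using scale(2)[of c 4 "\<lambda>l. v l - v' l"] by simp
  qed
  have main: "F c v \<le> t + M / 2" if cB: "c \<in> B I" and vB: "v \<in> B J" for c v
  proof -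
    obtain c' where c': "c' \<in> netI I" "(\<Sum>i\<in>I. (c i - c' i)\<^sup>2) \<le> 1/16"
      using netI_approx[OF finI, of c] cB unfolding B_def mem_Collect_eq by blast
    obtain v' where v': "v' \<in> netI J" "(\<Sum>l\<in>J. (v l - v' l)\<^sup>2) \<le> 1/16"
      using netI_approx[OF finJ, of v] vB unfolding B_def mem_Collect_eq by blast
    have "c' \<in> B I" using netI_ball[OF c'(1)] unfolding B_def by simp
    have "F c v = F c' v' + F (\<lambda>i. c i - c' i) v + F c' (\<lambda>l. v l - v' l)" by (rule split)
    also have "\<dots> \<le> t + M/4 + M/4"
      using H[OF c'(1) v'(1)] small[OF vB c'(2)] small2[OF \<open>c' \<in> B I\<close> v'(2)]
      unfolding F_def by linarith
    finally show ?thesis by simp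
  qed
  have "Sup S \<le> t + M / 2" using ne
    by (intro cSup_least) (auto simp: S_def intro: main)
  then have "M \<le> t + M / 2" by (simp add: M_def[symmetric])
  then have M2: "M \<le> 2 * t" by simp
  define s where "s = (\<Sum>i\<in>I. (c i)\<^sup>2)"
  have s0: "s \<ge> 0" unfolding s_def by (simp add: sum_nonneg)
  show ?thesis
  proof (cases "s = 0")
    case True
    then have "\<forall>i\<in>I. c i = 0" unfolding s_def using finI by (simp add: sum_nonneg_eq_0_iff)
    then show ?thesis by simp
  next
    case False
    then have sp: "s > 0" using s0 by simp
    define c1 where "c1 = (\<lambda>i. c i / sqrt s)"
    have c1B: "c1 \<in> B I" unfolding B_def c1_def using sp
      by (simp add: power_divide sum_divide_distrib[symmetric] s_def[symmetric])
    define y where "y = (\<lambda>l. \<Sum>i\<in>I. c1 i * K i l)"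
    define r where "r = sqrt (\<Sum>l\<in>J. (y l)\<^sup>2)"
    have r0: "r \<ge> 0" unfolding r_def by (simp add: sum_nonneg)
    have r2: "r\<^sup>2 = (\<Sum>l\<in>J. (y l)\<^sup>2)" unfolding r_def by (simp add: sum_nonneg)
    have rle: "r \<le> 2 * t"
    proof (cases "r = 0")
      case True then show ?thesis using t by simp
    next
      case False
      then have rp: "r > 0" using r0 by simp
      define v where "v = (\<lambda>l. y l / r)"
      have vB: "v \<in> B J" unfolding B_def v_def using rp r2
        by (simp add: power_divide sum_divide_distrib[symmetric])
      have "F c1 v = (\<Sum>l\<in>J. v l * y l)"
        unfolding F_def y_def by (subst sum.swap) (simp add: sum_distrib_left mult_ac)
      also have "\<dots> = (\<Sum>l\<in>J. (y l)\<^sup>2) / r" unfolding v_def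
        by (simp add: sum_divide_distrib power2_eq_square)
      also have "\<dots> = r" using rp r2[symmetric] by (simp add: power2_eq_square)
      finally have "r = F c1 v" ..
      also have "\<dots> \<le> M" by (rule up[OF c1B vB])
      finally show ?thesis using M2 by simp
    qed
    have "(\<Sum>l\<in>J. (\<Sum>i\<in>I. c i * K i l)\<^sup>2) = (\<Sum>l\<in>J. s * (y l)\<^sup>2)"
    proof (rule sum.cong[OF refl])
      fix l
      have "(\<Sum>i\<in>I. c i * K i l) = sqrt s * y l" unfolding y_def c1_def using sp
        by (simp add: sum_distrib_left)
      then show "(\<Sum>i\<in>I. c i * K i l)\<^sup>2 = s * (y l)\<^sup>2" using s0 by (simp add: power_mult_distrib)
    qed
    also have "\<dots> = s * r\<^sup>2" by (simp add: r2 sum_distrib_left)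
    also have "\<dots> \<le> s * (2 * t)\<^sup>2" using rle r0 s0 by (intro mult_left_mono power_mono) auto
    finally show ?thesis unfolding s_def by (simp add: power_mult_distrib mult_ac)
  qed
qed



lemma ip_sym: "ip n x y = ip n y x" unfolding ip_def by (simp add: mult.commute)

lemma ip_sum_left: "ip n (\<lambda>j. \<Sum>i\<in>A. c i * u i j) y = (\<Sum>i\<in>A. c i * ip n (u i) y)"
  unfolding ip_def by (simp add: sum_distrib_right sum_distrib_left mult_ac sum.swap[of _ A])

lemma ip_sum_right: "ip n y (\<lambda>j. \<Sum>i\<in>A. c i * u i j) = (\<Sum>i\<in>A. c i * ip n y (u i))"
  unfolding ip_def by (simp add: sum_distrib_right sum_distrib_left mult_ac sum.swap[of _ A])

lemma ip_diff_left: "ip n (\<lambda>j. x j - y j) z = ip n x z - ip n y z"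
  unfolding ip_def by (simp add: left_diff_distrib sum_subtractf)

lemma ip_scale_left: "ip n (\<lambda>j. a * x j) z = a * ip n x z"
  unfolding ip_def by (simp add: sum_distrib_left mult_ac)

lemma ip_self_nonneg: "ip n x x \<ge> 0" unfolding ip_def by (simp add: sum_nonneg)

lemma ip_self_zero: assumes "x \<in> Rn n" "ip n x x = 0" shows "x = (\<lambda>j. 0)"
proof
  fix j
  show "x j = 0"
  proof (cases "j < n")
    case True
    have "\<forall>j\<in>{..<n}. x j * x j = 0" using assms(2) unfolding ip_def
      by (subst sum_nonneg_eq_0_iff[symmetric]) auto
    then show ?thesis using True by auto
  next
    case False then show ?thesis using assms(1) unfolding Rn_def by auto
  qed
qed

definition orthonormal :: "nat \<Rightarrow> nat \<Rightarrow> (nat \<Rightarrow> nat \<Rightarrow> real) \<Rightarrow> bool" where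
  "orthonormal n k u \<longleftrightarrow> (\<forall>i<k. u i \<in> Rn n) \<and> (\<forall>i<k. \<forall>i'<k. ip n (u i) (u i') = (if i = i' then 1 else 0))"

lemma ip_orth_sum: assumes "orthonormal n k u" "i < k"
  shows "ip n (\<lambda>j. \<Sum>i'<k. c i' * u i' j) (u i) = c i"
proof -
  have "ip n (\<lambda>j. \<Sum>i'<k. c i' * u i' j) (u i) = (\<Sum>i'<k. c i' * ip n (u i') (u i))" by (rule ip_sum_left)
  also have "\<dots> = (\<Sum>i'<k. if i' = i then c i else 0)"
    using assms unfolding orthonormal_def by (intro sum.cong) auto
  also have "\<dots> = c i" using assms(2) by simp
  finally show ?thesis .
qed

lemma norm_orth_sum: assumes "orthonormal n k u"
  shows "ip n (\<lambda>j. \<Sum>i'<k. c i' * u i' j) (\<lambda>j. \<Sum>i'<k. c i' * u i' j) = (\<Sum>i<k. (c i)\<^sup>2)"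
proof -
  have "ip n (\<lambda>j. \<Sum>i'<k. c i' * u i' j) (\<lambda>j. \<Sum>i'<k. c i' * u i' j)
      = (\<Sum>i<k. c i * ip n (\<lambda>j. \<Sum>i'<k. c i' * u i' j) (u i))" by (rule ip_sum_right)
  also have "\<dots> = (\<Sum>i<k. c i * c i)" using ip_orth_sum[OF assms] by simp
  finally show ?thesis by (simp add: power2_eq_square)
qed

lemma gram_schmidt:
  assumes "\<forall>i<k. v i \<in> Rn n"
  shows "\<exists>k' u. k' \<le> k \<and> orthonormal n k' u \<and> (\<forall>i<k. \<exists>c. v i = (\<lambda>j. \<Sum>i'<k'. c i' * u i' j))"
  using assms
proof (induction k)
  case 0
  show ?case by (rule exI[of _ 0]) (auto simp: orthonormal_def)
next
  case (Suc k)
  then obtain k' u where k': "k' \<le> k" and on: "orthonormal n k' u"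
    and rep: "\<forall>i<k. \<exists>c. v i = (\<lambda>j. \<Sum>i'<k'. c i' * u i' j)" by auto
  define a where "a = (\<lambda>i'. ip n (v k) (u i'))"
  define p where "p = (\<lambda>j. \<Sum>i'<k'. a i' * u i' j)"
  define w where "w = (\<lambda>j. v k j - p j)"
  have vk: "v k \<in> Rn n" using Suc.prems by auto
  have pR: "p \<in> Rn n" using on unfolding p_def orthonormal_def Rn_def by auto
  have wR: "w \<in> Rn n" using vk pR unfolding w_def Rn_def by auto
  have worth: "ip n w (u i) = 0" if "i < k'" for i
  proof -
    have "ip n w (u i) = ip n (v k) (u i) - ip n p (u i)" unfolding w_def by (rule ip_diff_left)
    also have "ip n p (u i) = a i" unfolding p_def by (rule ip_orth_sum[OF on that])
    finally show ?thesis unfolding a_def by simp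
  qed
  show ?case
  proof (cases "ip n w w = 0")
    case True
    then have "w = (\<lambda>j. 0)" by (rule ip_self_zero[OF wR])
    then have "v k = p"
    proof -
      assume w0: "w = (\<lambda>j. 0)"
      show "v k = p"
      proof
        fix j show "v k j = p j" using fun_cong[OF w0, of j] unfolding w_def by simp
      qed
    qed
    then have "\<forall>i<Suc k. \<exists>c. v i = (\<lambda>j. \<Sum>i'<k'. c i' * u i' j)"
      using rep unfolding p_def by (auto simp: less_Suc_eq)
    then show ?thesis using k' on by (intro exI[of _ k'] exI[of _ u]) auto
  next
    case False
    then have wp: "ip n w w > 0" using ip_self_nonneg[of n w] by simp
    define nw where "nw = sqrt (ip n w w)"
    have nwp: "nw > 0" unfolding nw_def using wp by simp
    define u' where "u' = u(k' := (\<lambda>j. w j / nw))"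
    have uk: "ip n (u' k') (u' k') = 1"
      using ip_scale_left[of n "1/nw" w "\<lambda>j. w j / nw"] ip_scale_left[of n "1/nw" w w] nwp wp
      unfolding u'_def nw_def by (simp add: ip_sym)
    have uk2: "ip n (u' k') (u i) = 0" if "i < k'" for i
      using ip_scale_left[of n "1/nw" w "u i"] worth[OF that] unfolding u'_def by simp
    have on': "orthonormal n (Suc k') u'"
      unfolding orthonormal_def
    proof (intro conjI allI impI)
      fix i assume "i < Suc k'"
      then show "u' i \<in> Rn n" using on wR unfolding u'_def orthonormal_def Rn_def by auto
    next
      fix i i' assume i: "i < Suc k'" and i': "i' < Suc k'"
      show "ip n (u' i) (u' i') = (if i = i' then 1 else 0)"
      proof (cases "i = k'")
        case True
        then show ?thesis using uk uk2 i' unfolding u'_def by (auto simp: less_Suc_eq)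
      next
        case False
        then have "i < k'" using i by simp
        then show ?thesis using uk2 on i' unfolding u'_def orthonormal_def
          by (auto simp: less_Suc_eq ip_sym)
      qed
    qed
    have sum_ext: "(\<Sum>i'<Suc k'. c i' * u' i' j) = (\<Sum>i'<k'. c i' * u i' j) + c k' * u' k' j" for c j
      unfolding u'_def by simp
    have "\<forall>i<Suc k. \<exists>c. v i = (\<lambda>j. \<Sum>i'<Suc k'. c i' * u' i' j)"
    proof (intro allI impI)
      fix i assume "i < Suc k"
      show "\<exists>c. v i = (\<lambda>j. \<Sum>i'<Suc k'. c i' * u' i' j)"
      proof (cases "i < k")
        case True
        then obtain c where c: "v i = (\<lambda>j. \<Sum>i'<k'. c i' * u i' j)" using rep by auto
        show ?thesis
        proof (rule exI[of _ "c(k' := 0)"], rule ext)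
          fix j
          have "(\<Sum>i'<Suc k'. (c(k' := 0)) i' * u' i' j) = (\<Sum>i'<k'. (c(k' := 0)) i' * u' i' j)"
            by simp
          also have "\<dots> = (\<Sum>i'<k'. c i' * u i' j)"
            by (rule sum.cong) (auto simp: u'_def)
          finally show "v i j = (\<Sum>i'<Suc k'. (c(k' := 0)) i' * u' i' j)" using c by simp
        qed
      next
        case False
        then have "i = k" using \<open>i < Suc k\<close> by simp
        have "v k = (\<lambda>j. \<Sum>i'<Suc k'. (a(k' := nw)) i' * u' i' j)"
        proof
          fix j
          have "(\<Sum>i'<Suc k'. (a(k' := nw)) i' * u' i' j) = p j + nw * (w j / nw)"
            unfolding sum_ext p_def u'_def by simp
          also have "\<dots> = v k j" using nwp unfolding w_def by simp
          finally show "v k j = (\<Sum>i'<Suc k'. (a(k' := nw)) i' * u' i' j)" ..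
        qed
        then show ?thesis using \<open>i = k\<close> by blast
      qed
    qed
    then show ?thesis using k' on' by (intro exI[of _ "Suc k'"] exI[of _ u']) auto
  qed
qed



lemma sum_Pow_power: "finite A \<Longrightarrow> (\<Sum>B\<in>Pow A. x ^ card B) = (1 + x :: real) ^ card A"
proof (induction A rule: finite_induct)
  case empty then show ?case by simp
next
  case (insert a A)
  have fin: "finite (Pow A)" "finite (insert a ` Pow A)" using insert by auto
  have disj: "Pow A \<inter> insert a ` Pow A = {}" using insert by auto
  have inj: "inj_on (insert a) (Pow A)"
  proof (rule inj_onI)
    fix X Y assume "X \<in> Pow A" "Y \<in> Pow A" "insert a X = insert a Y"
    then show "X = Y" using insert(2) insert_ident[of a X Y] by blast
  qed
  have "(\<Sum>B\<in>Pow (insert a A). x ^ card B) = (\<Sum>B\<in>Pow A. x ^ card B) + (\<Sum>B\<in>insert a ` Pow A. x ^ card B)"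
    unfolding Pow_insert by (rule sum.union_disjoint[OF fin disj])
  also have "(\<Sum>B\<in>insert a ` Pow A. x ^ card B) = (\<Sum>B\<in>Pow A. x ^ card (insert a B))"
    by (rule sum.reindex[OF inj, unfolded comp_def])
  also have "\<dots> = (\<Sum>B\<in>Pow A. x * x ^ card B)"
  proof (rule sum.cong[OF refl])
    fix B assume "B \<in> Pow A"
    then have "finite B" "a \<notin> B" using insert finite_subset by auto
    then show "x ^ card (insert a B) = x * x ^ card B" by simp
  qed
  finally show ?case using insert by (simp add: sum_distrib_left[symmetric] algebra_simps)
qed

lemma card_small_subsets:
  assumes d: "0 < d" "d \<le> 1"
  shows "real (card {\<Omega>. \<Omega> \<subseteq> {..<m} \<and> card \<Omega> \<le> K}) * d ^ K \<le> (1 + d) ^ m"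
proof -
  let ?S = "{\<Omega>. \<Omega> \<subseteq> {..<m} \<and> card \<Omega> \<le> K}"
  have fin: "finite ?S" by (rule finite_subset[of _ "Pow {..<m}"]) auto
  have "real (card ?S) * d ^ K = (\<Sum>\<Omega>\<in>?S. d ^ K)" by simp
  also have "\<dots> \<le> (\<Sum>\<Omega>\<in>?S. d ^ card \<Omega>)"
    using d by (intro sum_mono power_decreasing) auto
  also have "\<dots> \<le> (\<Sum>\<Omega>\<in>Pow {..<m}. d ^ card \<Omega>)"
    using d by (intro sum_mono2) auto
  also have "\<dots> = (1 + d) ^ m" using sum_Pow_power[of "{..<m}" d] by simp
  finally show ?thesis .
qed

lemma ip_mat_vec_tAA:
  "ip n (mat_vec n (tAA n A \<Omega> z0 w0) x) y =
    (\<Sum>l\<in>\<Omega>. sgn (ip n (row n A l) z0 * ip n (row n A l) w0) * ip n (row n A l) x * ip n (row n A l) y)"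
proof -
  have "ip n (mat_vec n (tAA n A \<Omega> z0 w0) x) y
      = (\<Sum>i<n. (\<Sum>j<n. (\<Sum>l\<in>\<Omega>. sgn (ip n (row n A l) z0 * ip n (row n A l) w0) * row n A l i * row n A l j) * x j) * y i)"
    unfolding ip_def mat_vec_def tAA_def by simp
  also have "\<dots> = (\<Sum>i<n. \<Sum>j<n. \<Sum>l\<in>\<Omega>. sgn (ip n (row n A l) z0 * ip n (row n A l) w0) * (row n A l j * x j) * (row n A l i * y i))"
    by (simp add: sum_distrib_left sum_distrib_right mult_ac)
  also have "\<dots> = (\<Sum>l\<in>\<Omega>. \<Sum>j<n. \<Sum>i<n. sgn (ip n (row n A l) z0 * ip n (row n A l) w0) * (row n A l j * x j) * (row n A l i * y i))"
    by (subst sum.swap) (simp add: sum.swap[of _ "{..<n}" \<Omega>])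
  also have "\<dots> = (\<Sum>l\<in>\<Omega>. sgn (ip n (row n A l) z0 * ip n (row n A l) w0) * ip n (row n A l) x * ip n (row n A l) y)"
    unfolding ip_def by (simp add: sum_distrib_left sum_distrib_right mult_ac)
  finally show ?thesis .
qed

lemma event_from_bound:
  fixes \<epsilon> :: real
  assumes eps: "\<epsilon> \<ge> 0"
    and bx: "(\<Sum>l\<in>\<Omega>. (ip n (row n A l) x)\<^sup>2) \<le> \<epsilon> * ip n x x"
    and by': "(\<Sum>l\<in>\<Omega>. (ip n (row n A l) y)\<^sup>2) \<le> \<epsilon> * ip n y y"
  shows "\<bar>ip n (mat_vec n (tAA n A \<Omega> z0 w0) x) y\<bar> \<le> \<epsilon> * vnorm n x * vnorm n y"
proof -
  define s where "s = (\<lambda>l. sgn (ip n (row n A l) z0 * ip n (row n A l) w0))"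
  define p where "p = (\<lambda>l. ip n (row n A l) x)"
  define q where "q = (\<lambda>l. ip n (row n A l) y)"
  have "\<bar>ip n (mat_vec n (tAA n A \<Omega> z0 w0) x) y\<bar> = \<bar>\<Sum>l\<in>\<Omega>. s l * p l * q l\<bar>"
    unfolding ip_mat_vec_tAA s_def p_def q_def ..
  also have "\<dots> \<le> (\<Sum>l\<in>\<Omega>. \<bar>s l * p l * q l\<bar>)" by (rule sum_abs)
  also have "\<dots> \<le> (\<Sum>l\<in>\<Omega>. \<bar>p l\<bar> * \<bar>q l\<bar>)"
  proof (rule sum_mono)
    fix l
    have "\<bar>s l\<bar> \<le> 1" unfolding s_def by (simp add: abs_sgn_eq)
    then have "\<bar>s l\<bar> * (\<bar>p l\<bar> * \<bar>q l\<bar>) \<le> 1 * (\<bar>p l\<bar> * \<bar>q l\<bar>)" by (intro mult_right_mono) auto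
    then show "\<bar>s l * p l * q l\<bar> \<le> \<bar>p l\<bar> * \<bar>q l\<bar>" by (simp add: abs_mult mult_ac)
  qed
  also have "\<dots> \<le> L2_set p \<Omega> * L2_set q \<Omega>" by (rule L2_set_mult_ineq)
  also have "\<dots> \<le> sqrt (\<epsilon> * ip n x x) * sqrt (\<epsilon> * ip n y y)"
    unfolding L2_set_def p_def q_def using bx by' eps ip_self_nonneg[of n x] ip_self_nonneg[of n y]
    by (intro mult_mono) (auto simp: sum_nonneg)
  also have "\<dots> = \<epsilon> * vnorm n x * vnorm n y"
    unfolding vnorm_def using eps by (simp add: real_sqrt_mult)
  finally show ?thesis .
qed



lemma numeric:
  fixes \<epsilon> s :: real and Q k m :: nat
  assumes e: "0 < \<epsilon>" "\<epsilon> < 1" and sdef: "s = \<epsilon> / 100"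
    and Q: "real Q * (s\<^sup>2) ^ (2 * k) \<le> (1 + s\<^sup>2) ^ m"
    and km: "real (2 * k) \<le> s\<^sup>2 * real m" and m: "m \<ge> 1"
  shows "real Q * 48 ^ (3 * k) * exp (- real m * (sqrt \<epsilon> / 2)\<^sup>2 / 2) \<le> 2 * real m * exp (- \<epsilon> * real m / 36)"
proof -
  have sp: "s > 0" using e sdef by simp
  have a1: "(1 + s\<^sup>2) ^ m \<le> exp (s\<^sup>2 * real m)"
  proof -
    have "(1 + s\<^sup>2) ^ m \<le> exp (s\<^sup>2) ^ m"
      by (intro power_mono) (auto simp: add.commute exp_ge_add_one_self)
    also have "\<dots> = exp (s\<^sup>2 * real m)" by (simp add: exp_of_nat_mult[symmetric] mult.commute)
    finally show ?thesis .
  qed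
  have a2: "(1 / s) ^ (4 * k) \<le> exp (2 * s * real m)"
  proof -
    have "1 / s \<le> exp (1 / s)" using exp_ge_add_one_self[of "1/s"] by linarith
    then have "(1 / s) ^ (4 * k) \<le> exp (1 / s) ^ (4 * k)" using sp by (intro power_mono) auto
    also have "\<dots> = exp (real (4 * k) / s)" by (simp add: exp_of_nat_mult[symmetric])
    also have "\<dots> \<le> exp (2 * s * real m)"
    proof -
      have "real (4 * k) \<le> 2 * s\<^sup>2 * real m" using km by (simp add: mult.commute)
      then have "real (4 * k) / s \<le> 2 * s\<^sup>2 * real m / s" using sp by (intro divide_right_mono) auto
      also have "\<dots> = 2 * s * real m" using sp by (simp add: power2_eq_square)
      finally show ?thesis by simp
    qed
    finally show ?thesis .
  qed
  have a3: "(48::real) ^ (3 * k) \<le> exp (9 * s\<^sup>2 * real m)"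
  proof -
    have "2 \<le> exp (1::real)" using exp_ge_add_one_self[of 1] by simp
    then have "(2::real) ^ 6 \<le> exp 1 ^ 6" by (intro power_mono) auto
    then have "(48::real) \<le> exp 6" by (simp add: exp_of_nat_mult[symmetric])
    then have "(48::real) ^ (3 * k) \<le> exp 6 ^ (3 * k)" by (intro power_mono) auto
    also have "\<dots> = exp (real (18 * k))" by (simp add: exp_of_nat_mult[symmetric])
    also have "\<dots> \<le> exp (9 * s\<^sup>2 * real m)" using km by (simp add: mult.commute)
    finally show ?thesis .
  qed
  have Qb: "real Q \<le> exp (s\<^sup>2 * real m) * (1 / s) ^ (4 * k)"
  proof -
    have pos: "(s\<^sup>2) ^ (2 * k) > 0" using sp by simp
    have "real Q \<le> (1 + s\<^sup>2) ^ m / (s\<^sup>2) ^ (2 * k)" using Q pos by (simp add: le_divide_eq)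
    also have "\<dots> = (1 + s\<^sup>2) ^ m * (1 / s) ^ (4 * k)"
      by (simp add: power_mult[symmetric] power_divide mult_ac power_one_over)
    also have "\<dots> \<le> exp (s\<^sup>2 * real m) * (1 / s) ^ (4 * k)" using a1 sp by (intro mult_right_mono) auto
    finally show ?thesis .
  qed
  have "real Q * 48 ^ (3 * k) \<le> exp (s\<^sup>2 * real m) * exp (2 * s * real m) * exp (9 * s\<^sup>2 * real m)"
    using Qb a2 a3 sp
    by (intro mult_mono) (auto intro: order_trans[OF _ mult_left_mono[OF a2]])
  also have "\<dots> = exp (10 * s\<^sup>2 * real m + 2 * s * real m)" by (simp add: exp_add[symmetric] algebra_simps)
  finally have b: "real Q * 48 ^ (3 * k) \<le> exp (10 * s\<^sup>2 * real m + 2 * s * real m)" .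
  have sq: "(sqrt \<epsilon> / 2)\<^sup>2 = \<epsilon> / 4" using e by (simp add: power_divide)
  have "real Q * 48 ^ (3 * k) * exp (- real m * (sqrt \<epsilon> / 2)\<^sup>2 / 2)
      \<le> exp (10 * s\<^sup>2 * real m + 2 * s * real m) * exp (- real m * (\<epsilon> / 4) / 2)"
    unfolding sq using b by (intro mult_right_mono) auto
  also have "\<dots> = exp (10 * s\<^sup>2 * real m + 2 * s * real m - real m * \<epsilon> / 8)"
    by (simp add: exp_add[symmetric])
  also have "\<dots> \<le> exp (- \<epsilon> * real m / 36)"
  proof -
    have "10 * s\<^sup>2 + 2 * s \<le> \<epsilon> / 8 - \<epsilon> / 36"
    proof -
      have "s\<^sup>2 = \<epsilon> * \<epsilon> / 10000" unfolding sdef by (simp add: power2_eq_square)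
      also have "\<dots> \<le> \<epsilon> / 10000" using e by (intro divide_right_mono) (auto simp: mult_le_cancel_left1)
      finally show ?thesis unfolding sdef using e by simp
    qed
    then have "(10 * s\<^sup>2 + 2 * s) * real m \<le> (\<epsilon> / 8 - \<epsilon> / 36) * real m" by (intro mult_right_mono) auto
    then show ?thesis by (simp add: algebra_simps)
  qed
  also have "\<dots> \<le> 2 * real m * exp (- \<epsilon> * real m / 36)"
  proof -
    have "1 * exp (- \<epsilon> * real m / 36) \<le> (2 * real m) * exp (- \<epsilon> * real m / 36)"
      using m by (intro mult_right_mono) auto
    then show ?thesis by simp
  qed
  finally show ?thesis .
qed


lemma gauss_sum_meas:
  "(\<lambda>A. \<Sum>p\<in>{..<m}\<times>{..<n}. C p * A p) \<in> borel_measurable (gauss_mat m n)"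
proof -
  define N where "N = density lborel (normal_density 0 (1 / sqrt (real m)))"
  have proj: "(\<lambda>A. A p) \<in> borel_measurable (gauss_mat m n)" if "p \<in> {..<m}\<times>{..<n}" for p
  proof -
    have "(\<lambda>A. A p) \<in> measurable (gauss_mat m n) N" unfolding gauss_mat_def N_def using that
      by (rule measurable_component_singleton)
    moreover have "sets N = sets borel" unfolding N_def by simp
    ultimately show ?thesis using measurable_cong_sets[of "gauss_mat m n" "gauss_mat m n" N borel] by blast
  qed
  show ?thesis using proj by (intro borel_measurable_sum borel_measurable_times) auto
qed

lemma sum_if_subset: "finite A \<Longrightarrow> B \<subseteq> A \<Longrightarrow> (\<Sum>l\<in>A. if l \<in> B then f l else 0) = (\<Sum>l\<in>B. f l)"
  using sum.inter_restrict[of A f B] by (simp add: Int_absorb1)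

lemma C_sum_identity:
  fixes m n k' :: nat
  assumes "\<Omega> \<subseteq> {..<m}"
  shows "(\<Sum>p\<in>{..<m}\<times>{..<n}. (case p of (l,j) \<Rightarrow> if l \<in> \<Omega> then v l * (\<Sum>i<k'. c i * u i j) else 0) * A p)
       = (\<Sum>i<k'. \<Sum>l\<in>\<Omega>. c i * v l * ip n (row n A l) (u i))"
proof -
  have "(\<Sum>p\<in>{..<m}\<times>{..<n}. (case p of (l,j) \<Rightarrow> if l \<in> \<Omega> then v l * (\<Sum>i<k'. c i * u i j) else 0) * A p)
      = (\<Sum>l<m. \<Sum>j<n. (if l \<in> \<Omega> then v l * (\<Sum>i<k'. c i * u i j) else 0) * A (l,j))"
    by (simp add: sum.cartesian_product split_def)
  also have "\<dots> = (\<Sum>l<m. if l \<in> \<Omega> then (\<Sum>j<n. v l * (\<Sum>i<k'. c i * u i j) * A (l,j)) else 0)"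
    by (intro sum.cong) auto
  also have "\<dots> = (\<Sum>l\<in>\<Omega>. \<Sum>j<n. v l * (\<Sum>i<k'. c i * u i j) * A (l,j))"
    using assms by (simp add: sum.inter_restrict[symmetric] Int_absorb1)
  also have "\<dots> = (\<Sum>l\<in>\<Omega>. v l * ip n (row n A l) (\<lambda>j. \<Sum>i<k'. c i * u i j))"
    unfolding ip_def row_def by (intro sum.cong) (auto simp: sum_distrib_left mult_ac)
  also have "\<dots> = (\<Sum>l\<in>\<Omega>. v l * (\<Sum>i<k'. c i * ip n (row n A l) (u i)))" by (simp add: ip_sum_right)
  also have "\<dots> = (\<Sum>i<k'. \<Sum>l\<in>\<Omega>. c i * v l * ip n (row n A l) (u i))"
    by (simp add: sum_distrib_left sum.swap[of _ \<Omega>] mult_ac)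
  finally show ?thesis .
qed

lemma C_sq:
  fixes m n k' :: nat
  assumes "\<Omega> \<subseteq> {..<m}" "orthonormal n k' u"
  shows "(\<Sum>p\<in>{..<m}\<times>{..<n}. ((case p of (l,j) \<Rightarrow> if l \<in> \<Omega> then v l * (\<Sum>i<k'. c i * u i j) else 0))\<^sup>2)
       = (\<Sum>l\<in>\<Omega>. (v l)\<^sup>2) * (\<Sum>i<k'. (c i)\<^sup>2)"
proof -
  define x where "x = (\<lambda>j. \<Sum>i<k'. c i * u i j)"
  have "(\<Sum>p\<in>{..<m}\<times>{..<n}. ((case p of (l,j) \<Rightarrow> if l \<in> \<Omega> then v l * (\<Sum>i<k'. c i * u i j) else 0))\<^sup>2)
      = (\<Sum>l<m. \<Sum>j<n. (if l \<in> \<Omega> then v l * x j else 0)\<^sup>2)"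
    unfolding x_def by (simp add: sum.cartesian_product split_def)
  also have "\<dots> = (\<Sum>l<m. if l \<in> \<Omega> then (v l)\<^sup>2 * ip n x x else 0)"
    unfolding ip_def by (intro sum.cong) (auto simp: sum_distrib_left power_mult_distrib power2_eq_square mult_ac)
  also have "\<dots> = (\<Sum>l\<in>\<Omega>. (v l)\<^sup>2 * ip n x x)"
    by (rule sum_if_subset[OF finite_lessThan assms(1)])
  also have "\<dots> = (\<Sum>l\<in>\<Omega>. (v l)\<^sup>2) * (\<Sum>i<k'. (c i)\<^sup>2)"
    unfolding x_def norm_orth_sum[OF assms(2)] by (simp add: sum_distrib_right)
  finally show ?thesis .
qed

theorem lemma26:
  fixes \<epsilon> :: real
  assumes "0 < \<epsilon>" "\<epsilon> < 1"
  shows "\<exists>\<delta>>0. \<forall>(m::nat) (n::nat) (k::nat) T W0 Z0.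
           k < m \<longrightarrow> subspace_of_dim n k T \<longrightarrow> W0 \<subseteq> Rn n \<longrightarrow> Z0 \<subseteq> Rn n \<longrightarrow>
           real m \<ge> 9 * real k / \<epsilon> \<longrightarrow> real (2 * k) \<le> \<delta> * real m \<longrightarrow>
           (\<exists>E'\<in>sets (gauss_mat m n). E' \<subseteq> event_E m n k \<epsilon> T W0 Z0 \<and>
              measure (gauss_mat m n) E' \<ge> 1 - 2 * real m * exp (- \<epsilon> * real m / 36))"
proof -
  define s where "s = \<epsilon> / 100"
  have sp: "s > 0" "s \<le> 1" using assms unfolding s_def by auto
  have dp: "s\<^sup>2 > 0" "s\<^sup>2 \<le> 1" using sp by (auto simp: power_le_one)
  show ?thesis
  proof (rule exI[of _ "s\<^sup>2"], intro conjI allI impI)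
    show "s\<^sup>2 > 0" by (rule dp(1))
  next
    fix m n k :: nat and T W0 Z0 :: "(nat \<Rightarrow> real) set"
    assume km: "k < m" and sub: "subspace_of_dim n k T" and "W0 \<subseteq> Rn n" "Z0 \<subseteq> Rn n"
      and "real m \<ge> 9 * real k / \<epsilon>" and kd: "real (2 * k) \<le> s\<^sup>2 * real m"
    define M where "M = gauss_mat m n"
    interpret P: prob_space M unfolding M_def by (rule prob_space_gauss_mat)
    obtain v where v: "\<forall>i<k. v i \<in> Rn n" and Tdef: "T = {x. \<exists>c. x = (\<lambda>j. \<Sum>i<k. c i * v i j)}"
      using sub unfolding subspace_of_dim_def by blast
    obtain k' u where k'k: "k' \<le> k" and on: "orthonormal n k' u"
      and rep: "\<forall>i<k. \<exists>c. v i = (\<lambda>j. \<Sum>i'<k'. c i' * u i' j)"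
      using gram_schmidt[OF v] by blast
    from rep obtain d where d: "\<forall>i<k. v i = (\<lambda>j. \<Sum>i'<k'. d i i' * u i' j)" by metis
    have Trep: "\<exists>e. x = (\<lambda>j. \<Sum>i'<k'. e i' * u i' j)" if xT: "x \<in> T" for x
    proof -
      obtain c where c: "x = (\<lambda>j. \<Sum>i<k. c i * v i j)" using xT Tdef by blast
      have "x = (\<lambda>j. \<Sum>i'<k'. (\<Sum>i<k. c i * d i i') * u i' j)"
      proof
        fix j
        have "x j = (\<Sum>i<k. c i * (\<Sum>i'<k'. d i i' * u i' j))" using c d by simp
        also have "\<dots> = (\<Sum>i'<k'. (\<Sum>i<k. c i * d i i') * u i' j)"
          by (simp add: sum_distrib_left sum_distrib_right sum.swap[of _ "{..<k}"] mult_ac)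
        finally show "x j = (\<Sum>i'<k'. (\<Sum>i<k. c i * d i i') * u i' j)" .
      qed
      then show ?thesis by (intro exI[of _ "\<lambda>i'. \<Sum>i<k. c i * d i i'"]) simp
    qed
    define t where "t = sqrt \<epsilon> / 2"
    have t0: "t \<ge> 0" unfolding t_def using assms by simp
    have t2: "4 * t\<^sup>2 = \<epsilon>" unfolding t_def using assms by (simp add: power_divide)
    define C where "C = (\<lambda>\<Omega> (c::nat\<Rightarrow>real) (w::nat\<Rightarrow>real) (p::nat\<times>nat).
                           case p of (l,j) \<Rightarrow> if l \<in> \<Omega> then w l * (\<Sum>i<k'. c i * u i j) else 0)"
    define Os where "Os = {\<Omega>. \<Omega> \<subseteq> {..<m} \<and> card \<Omega> \<le> 2 * k}"
    define X where "X = Sigma Os (\<lambda>\<Omega>. netI {..<k'} \<times> netI \<Omega>)"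
    define bad where "bad = (\<lambda>(\<Omega>, c, w). {A \<in> space M. t < (\<Sum>p\<in>{..<m}\<times>{..<n}. C \<Omega> c w p * A p)})"
    define E' where "E' = space M - (\<Union>x\<in>X. bad x)"
    have finOs: "finite Os" unfolding Os_def by (rule finite_subset[of _ "Pow {..<m}"]) auto
    have Osfin: "finite \<Omega>" if "\<Omega> \<in> Os" for \<Omega>
      using that unfolding Os_def by (auto intro: finite_subset)
    have finX: "finite X" unfolding X_def using finOs Osfin
      by (intro finite_SigmaI finite_cartesian_product netI_finite) auto
    have badsets: "bad x \<in> sets M" for x
    proof -
      obtain \<Omega> c w where x: "x = (\<Omega>, c, w)" by (cases x) auto
      have "(\<lambda>A. \<Sum>p\<in>{..<m}\<times>{..<n}. C \<Omega> c w p * A p) \<in> borel_measurable M"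
        unfolding M_def by (rule gauss_sum_meas)
      then show ?thesis unfolding x bad_def prod.case by measurable
    qed
    have badm: "measure M (bad x) \<le> exp (- real m * t\<^sup>2 / 2)" if "x \<in> X" for x
    proof -
      obtain \<Omega> c w where x: "x = (\<Omega>, c, w)" by (cases x) auto
      have xX: "(\<Omega>, c, w) \<in> X" using that by (simp only: x)
      then have oO: "\<Omega> \<in> Os" and c: "c \<in> netI {..<k'}" and w: "w \<in> netI \<Omega>"
        unfolding X_def by (simp_all only: mem_Sigma_iff mem_Times_iff fst_conv snd_conv)
      have \<Omega>: "\<Omega> \<subseteq> {..<m}" using oO unfolding Os_def by simp
      have "(\<Sum>p\<in>{..<m}\<times>{..<n}. (C \<Omega> c w p)\<^sup>2) = (\<Sum>l\<in>\<Omega>. (w l)\<^sup>2) * (\<Sum>i<k'. (c i)\<^sup>2)"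
        unfolding C_def by (rule C_sq[OF \<Omega>(1) on])
      also have "\<dots> \<le> 1 * 1" using netI_ball[OF c] netI_ball[OF w]
        by (intro mult_mono) (auto simp: sum_nonneg)
      finally have "(\<Sum>p\<in>{..<m}\<times>{..<n}. (C \<Omega> c w p)\<^sup>2) \<le> 1" by simp
      from gauss_tail[OF _ this t0] km show ?thesis unfolding x bad_def M_def by simp
    qed
    have cardX: "real (card X) \<le> real (card Os) * 48 ^ (3 * k)"
    proof -
      have "card X = (\<Sum>\<Omega>\<in>Os. card (netI {..<k'} \<times> netI \<Omega>))"
        unfolding X_def using finOs Osfin by (intro card_SigmaI) (auto intro: finite_cartesian_product netI_finite)
      then have "real (card X) = (\<Sum>\<Omega>\<in>Os. real (card (netI {..<k'})) * real (card (netI \<Omega>)))"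
        by (simp add: card_cartesian_product)
      also have "\<dots> \<le> (\<Sum>\<Omega>\<in>Os. 48 ^ k * 48 ^ (2 * k))"
      proof (rule sum_mono)
        fix \<Omega> assume o: "\<Omega> \<in> Os"
        have "real (card (netI {..<k'})) \<le> 48 ^ k'" using netI_card[of "{..<k'}"] by simp
        also have "\<dots> \<le> 48 ^ k" using k'k by (intro power_increasing) auto
        finally have a: "real (card (netI {..<k'})) \<le> 48 ^ k" .
        have "real (card (netI \<Omega>)) \<le> 48 ^ card \<Omega>" using netI_card[OF Osfin[OF o]] .
        also have "\<dots> \<le> 48 ^ (2 * k)" using o unfolding Os_def by (intro power_increasing) auto
        finally have b: "real (card (netI \<Omega>)) \<le> 48 ^ (2 * k)" .
        show "real (card (netI {..<k'})) * real (card (netI \<Omega>)) \<le> 48 ^ k * 48 ^ (2 * k)"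
          using a b by (intro mult_mono) auto
      qed
      also have "\<dots> = real (card Os) * 48 ^ (3 * k)" by (simp add: power_add[symmetric])
      finally show ?thesis .
    qed
    have m1: "m \<ge> 1" using km by simp
    have Os_bound: "real (card Os) * (s\<^sup>2) ^ (2 * k) \<le> (1 + s\<^sup>2) ^ m"
      unfolding Os_def using dp by (rule card_small_subsets)
    have num: "real (card Os) * 48 ^ (3 * k) * exp (- real m * t\<^sup>2 / 2) \<le> 2 * real m * exp (- \<epsilon> * real m / 36)"
      unfolding t_def by (rule numeric[OF assms s_def Os_bound kd m1])
    have Usets: "(\<Union>x\<in>X. bad x) \<in> sets M" by (rule sets.finite_UN[OF finX badsets])
    have "measure M (\<Union>x\<in>X. bad x) \<le> (\<Sum>x\<in>X. measure M (bad x))"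
      using finX badsets by (intro measure_UNION_le) auto
    also have "\<dots> \<le> (\<Sum>x\<in>X. exp (- real m * t\<^sup>2 / 2))" using badm by (intro sum_mono) auto
    also have "\<dots> = real (card X) * exp (- real m * t\<^sup>2 / 2)" by simp
    also have "\<dots> \<le> real (card Os) * 48 ^ (3 * k) * exp (- real m * t\<^sup>2 / 2)"
      using cardX by (intro mult_right_mono) auto
    also have "\<dots> \<le> 2 * real m * exp (- \<epsilon> * real m / 36)" by (rule num)
    finally have Ubound: "measure M (\<Union>x\<in>X. bad x) \<le> 2 * real m * exp (- \<epsilon> * real m / 36)" .
    have E'sets: "E' \<in> sets M" unfolding E'_def by (rule sets.compl_sets[OF Usets])
    have E'meas: "measure M E' \<ge> 1 - 2 * real m * exp (- \<epsilon> * real m / 36)"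
      unfolding E'_def P.prob_compl[OF Usets] using Ubound by linarith
    have E'sub: "E' \<subseteq> event_E m n k \<epsilon> T W0 Z0"
    proof
      fix A assume A: "A \<in> E'"
      then have Asp: "A \<in> space M" unfolding E'_def by auto
      have good: "\<forall>\<Omega>. \<Omega> \<subseteq> {..<m} \<and> card \<Omega> \<le> 2 * k \<longrightarrow>
        (\<forall>x\<in>T. \<forall>y\<in>T. \<forall>w0\<in>W0. \<forall>z0\<in>Z0.
           \<bar>ip n (mat_vec n (tAA n A \<Omega> z0 w0) x) y\<bar> \<le> \<epsilon> * vnorm n x * vnorm n y)"
      proof (intro allI impI ballI)
        fix \<Omega> x y w0 z0
        assume o: "\<Omega> \<subseteq> {..<m} \<and> card \<Omega> \<le> 2 * k" and x: "x \<in> T" and y: "y \<in> T"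
        have oO: "\<Omega> \<in> Os" using o unfolding Os_def by auto
        have finO: "finite \<Omega>" using o finite_subset[of \<Omega> "{..<m}"] by simp
        define K where "K = (\<lambda>i l. ip n (row n A l) (u i))"
        have H: "(\<Sum>i\<in>{..<k'}. \<Sum>l\<in>\<Omega>. c i * w l * K i l) \<le> t"
          if c: "c \<in> netI {..<k'}" and w: "w \<in> netI \<Omega>" for c w
        proof -
          have xX: "(\<Omega>, c, w) \<in> X" unfolding X_def using oO c w by simp
          have "A \<notin> bad (\<Omega>, c, w)" using A xX unfolding E'_def by blast
          then have "\<not> t < (\<Sum>p\<in>{..<m}\<times>{..<n}. C \<Omega> c w p * A p)" using Asp unfolding bad_def by simp
          moreover have "(\<Sum>p\<in>{..<m}\<times>{..<n}. C \<Omega> c w p * A p) = (\<Sum>i<k'. \<Sum>l\<in>\<Omega>. c i * w l * K i l)"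
            unfolding C_def K_def using o by (intro C_sum_identity) auto
          ultimately show ?thesis by simp
        qed
        have BB: "(\<Sum>l\<in>\<Omega>. (\<Sum>i\<in>{..<k'}. e i * K i l)\<^sup>2) \<le> 4 * t\<^sup>2 * (\<Sum>i\<in>{..<k'}. (e i)\<^sup>2)" for e
          by (rule bilinear_bound[OF _ finO t0 H]) auto
        have bnd: "(\<Sum>l\<in>\<Omega>. (ip n (row n A l) z)\<^sup>2) \<le> \<epsilon> * ip n z z" if zT: "z \<in> T" for z
        proof -
          obtain e where e: "z = (\<lambda>j. \<Sum>i'<k'. e i' * u i' j)" using Trep[OF zT] by blast
          have "(\<Sum>l\<in>\<Omega>. (ip n (row n A l) z)\<^sup>2) = (\<Sum>l\<in>\<Omega>. (\<Sum>i\<in>{..<k'}. e i * K i l)\<^sup>2)"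
            unfolding e K_def by (simp add: ip_sum_right)
          also have "\<dots> \<le> 4 * t\<^sup>2 * (\<Sum>i\<in>{..<k'}. (e i)\<^sup>2)" by (rule BB)
          also have "\<dots> = \<epsilon> * ip n z z" unfolding e norm_orth_sum[OF on] t2 by simp
          finally show ?thesis .
        qed
        show "\<bar>ip n (mat_vec n (tAA n A \<Omega> z0 w0) x) y\<bar> \<le> \<epsilon> * vnorm n x * vnorm n y"
          using assms(1) bnd[OF x] bnd[OF y] by (intro event_from_bound) auto
      qed
      show "A \<in> event_E m n k \<epsilon> T W0 Z0"
        unfolding event_E_def mem_Collect_eq M_def[symmetric] by (rule conjI[OF Asp good])
    qed
    show "\<exists>E'\<in>sets (gauss_mat m n). E' \<subseteq> event_E m n k \<epsilon> T W0 Z0 \<and>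
              measure (gauss_mat m n) E' \<ge> 1 - 2 * real m * exp (- \<epsilon> * real m / 36)"
      unfolding M_def[symmetric] using E'sets E'sub E'meas by (intro bexI[of _ E'] conjI)
  qed
qed

end
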